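(* Let $\mathcal{H}$ be a Hilbert space of finite dimension $d$, let $\rho,\eta\in\mathcal{D}(\mathcal{H})$ be quantum states and let $s>0$. Then $\eta=\frac{\rho+s'\tau}{1+s'}$ for some real number $0<s'\le s$ and some state $\tau\in\mathcal{D}(\mathcal{H})$ if and only if $S_m\!\left(\frac{1+s}{s}\eta-\frac1s\rho\right)\ge 0$ for all $m=1,2,\dots,d$.
   Context: $\mathcal{D}(\mathcal{H})$ is the set of density operators on $\mathcal{H}$. For a Hermitian operator $X$ on $\mathcal{H}$, define recursively $S_0(X)=1$ and $S_m(X)=\frac1m\sum_{l=1}^m(-1)^{l-1}\operatorname{tr}[X^l]\,S_{m-l}(X)$ for $m\ge1$. *)

theory Defs
  imports "HOL-Analysis.Analysis"
begin

text \<open>Operators on a d-dimensional complex Hilbert space are d x d complex matrices,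
  indexed by a finite type 'n with CARD('n) = d.\<close>

definition adjoint_mat :: "complex^'n^'n \<Rightarrow> complex^'n^'n" where
  "adjoint_mat A = (\<chi> i j. cnj (A $ j $ i))"

definition hermitian_mat :: "complex^'n^'n \<Rightarrow> bool" where
  "hermitian_mat A \<longleftrightarrow> adjoint_mat A = A"

definition quad_form :: "complex^'n^'n \<Rightarrow> complex^'n \<Rightarrow> complex" where
  "quad_form A x = (\<Sum>i\<in>UNIV. \<Sum>j\<in>UNIV. cnj (x $ i) * A $ i $ j * x $ j)"

definition psd_mat :: "complex^'n^'n \<Rightarrow> bool" where
  "psd_mat A \<longleftrightarrow> hermitian_mat A \<and> (\<forall>x. Im (quad_form A x) = 0 \<and> 0 \<le> Re (quad_form A x))"

definition density_op :: "complex^'n^'n \<Rightarrow> bool" where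
  "density_op A \<longleftrightarrow> psd_mat A \<and> trace A = 1"

primrec matpow :: "complex^'n^'n \<Rightarrow> nat \<Rightarrow> complex^'n^'n" where
  "matpow A 0 = mat 1"
| "matpow A (Suc k) = matpow A k ** A"

function S_poly :: "nat \<Rightarrow> complex^'n^'n \<Rightarrow> complex" where
  "S_poly m X = (if m = 0 then 1 else
     (1 / of_nat m) * (\<Sum>l\<in>{1..m}. (-1) ^ (l - 1) * trace (matpow X l) * S_poly (m - l) X))"
  by auto
termination by (relation "Wellfounded.measure fst") auto

declare S_poly.simps[simp del]

end

theory Submission
  imports Defs "Jordan_Normal_Form.Schur_Decomposition"
begin


lemma coeff_lin_mult:
  fixes a :: "complex"
  shows "coeff ([:1, a:] * q) k = coeff q k + (if k = 0 then 0 else a * coeff q (k - 1))"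
proof -
  have "[:1, a:] * q = q + pCons 0 (Polynomial.smult a q)"
    by (simp add: mult_pCons_left)
  then show ?thesis by (cases k) (auto simp: coeff_pCons)
qed

lemma telescope:
  fixes a :: "complex"
  assumes "p = [:1, a:] * q"
  shows "(\<Sum>l\<le>m. (-a)^l * coeff p (m - l)) = coeff q m"
proof (induction m)
  case 0
  then show ?case using assms by (simp add: coeff_lin_mult)
next
  case (Suc m)
  have "(\<Sum>l\<le>Suc m. (-a)^l * coeff p (Suc m - l)) =
        coeff p (Suc m) + (\<Sum>l\<le>m. (-a)^(Suc l) * coeff p (Suc m - Suc l))"
    by (subst sum.atMost_Suc_shift) simp
  also have "(\<Sum>l\<le>m. (-a)^(Suc l) * coeff p (Suc m - Suc l)) = (-a) * (\<Sum>l\<le>m. (-a)^l * coeff p (m - l))"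
    by (simp add: sum_distrib_left mult.assoc)
  also have "\<dots> = - a * coeff q m" using Suc by simp
  finally show ?case using assms by (simp add: coeff_lin_mult)
qed

lemma sum_split0: "(\<Sum>l\<le>(m::nat). f l) = f 0 + (\<Sum>l\<in>{1..m}. (f l :: complex))"
  by (subst atMost_atLeast0, subst sum.atLeast_Suc_atMost) auto

lemma neg_pow_aux: fixes a :: complex shows "l \<in> {1..m} \<Longrightarrow> (-a)^l * c = - ((-1)^(l-1) * a^l * c)"
proof -
  assume "l \<in> {1..m}"
  then obtain k where k: "l = Suc k" by (cases l) auto
  have "(-a)^l = (-1)^l * a^l" by (rule power_minus)
  then show ?thesis using k by simp
qed

lemma newton_one:
  fixes a :: "complex"
  assumes "p = [:1, a:] * q" and "m \<ge> 1"
  shows "(\<Sum>l\<in>{1..m}. (-1)^(l-1) * a^l * coeff p (m - l)) = a * coeff q (m - 1)"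
proof -
  have split: "(\<Sum>l\<le>m. (-a)^l * coeff p (m - l)) = coeff p m + (\<Sum>l\<in>{1..m}. (-a)^l * coeff p (m - l))"
    by (subst sum_split0) simp
  have neg: "(\<Sum>l\<in>{1..m}. (-a)^l * coeff p (m - l)) = (\<Sum>l\<in>{1..m}. - ((-1)^(l-1) * a^l * coeff p (m - l)))"
    by (rule sum.cong[OF refl], rule neg_pow_aux)
  have "coeff q m = coeff p m - (\<Sum>l\<in>{1..m}. (-1)^(l-1) * a^l * coeff p (m - l))"
    using telescope[OF assms(1), of m] split neg by (simp add: sum_negf)
  moreover have "coeff p m = coeff q m + a * coeff q (m - 1)"
    unfolding assms(1) coeff_lin_mult using assms(2) by simp
  ultimately show ?thesis by (simp add: algebra_simps)
qed

definition Epoly :: "(nat \<Rightarrow> complex) \<Rightarrow> nat \<Rightarrow> complex poly" where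
  "Epoly lam n = (\<Prod>i<n. [:1, lam i:])"

lemma newton:
  fixes lam :: "nat \<Rightarrow> complex"
  assumes "m \<ge> 1"
  shows "of_nat m * coeff (Epoly lam n) m =
    (\<Sum>l\<in>{1..m}. (-1)^(l-1) * (\<Sum>i<n. lam i ^ l) * coeff (Epoly lam n) (m - l))"
proof -
  define E where "E = Epoly lam n"
  define q where "q i = (\<Prod>j\<in>{..<n} - {i}. [:1, lam j:])" for i
  have Eq: "E = [:1, lam i:] * q i" if "i < n" for i
    unfolding E_def Epoly_def q_def using that by (simp add: prod.remove[of "{..<n}" i])
  have "pderiv E = (\<Sum>i<n. q i * [:lam i:])"
    unfolding E_def Epoly_def q_def by (simp add: pderiv_prod pderiv_pCons)
  then have "coeff (pderiv E) (m - 1) = (\<Sum>i<n. lam i * coeff (q i) (m - 1))"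
    by (simp add: coeff_sum mult.commute)
  moreover have "coeff (pderiv E) (m - 1) = of_nat m * coeff E m"
    using assms by (simp add: coeff_pderiv)
  ultimately have "of_nat m * coeff E m = (\<Sum>i<n. lam i * coeff (q i) (m - 1))" by simp
  also have "\<dots> = (\<Sum>i<n. \<Sum>l\<in>{1..m}. (-1)^(l-1) * lam i^l * coeff E (m - l))"
  proof (rule sum.cong[OF refl])
    fix i assume "i \<in> {..<n}"
    then have "i < n" by simp
    from newton_one[OF Eq[OF this] assms]
    show "lam i * coeff (q i) (m - 1) = (\<Sum>l\<in>{1..m}. (-1)^(l-1) * lam i^l * coeff E (m - l))" by simp
  qed
  also have "\<dots> = (\<Sum>l\<in>{1..m}. \<Sum>i<n. (-1)^(l-1) * lam i^l * coeff E (m - l))"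
    by (rule sum.swap)
  also have "\<dots> = (\<Sum>l\<in>{1..m}. (-1)^(l-1) * (\<Sum>i<n. lam i ^ l) * coeff E (m - l))"
    by (rule sum.cong[OF refl]) (simp add: sum_distrib_left sum_distrib_right)
  finally show ?thesis by (simp only: E_def)
qed

lemma Epoly_Suc: "Epoly lam (Suc n) = [:1, lam n:] * Epoly lam n"
  unfolding Epoly_def by (simp add: lessThan_Suc mult.commute)

lemma Epoly_nonneg:
  assumes "\<forall>i<n. 0 \<le> lam i"
  shows "0 \<le> coeff (Epoly lam n) m"
  using assms
proof (induction n arbitrary: m)
  case 0
  then show ?case by (simp add: Epoly_def coeff_1 less_eq_complex_def)
next
  case (Suc n)
  have "0 \<le> coeff (Epoly lam n) k" for k using Suc by simp
  moreover have "0 \<le> lam n" using Suc by simp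
  ultimately show ?case unfolding Epoly_Suc coeff_lin_mult
    by (simp add: add_nonneg_nonneg mult_nonneg_nonneg)
qed

lemma Epoly_coeff0: "coeff (Epoly lam n) 0 = 1"
  by (induction n) (simp_all add: Epoly_def Epoly_Suc[unfolded Epoly_def] coeff_lin_mult)

lemma Epoly_degree: "degree (Epoly lam n) \<le> n"
proof -
  have "degree (Epoly lam n) \<le> sum (degree \<circ> (\<lambda>i. [:1, lam i:])) {..<n}"
    unfolding Epoly_def by (rule degree_prod_sum_le) simp
  also have "\<dots> \<le> sum (\<lambda>i. 1) {..<n}"
    by (rule sum_mono) (simp add: degree_pCons_le)
  finally show ?thesis by simp
qed

lemma Epoly_coeffs_nonneg_imp:
  assumes nn: "\<forall>m\<in>{1..n}. 0 \<le> coeff (Epoly lam n) m"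
    and i: "i < n" and re: "Im (lam i) = 0"
  shows "0 \<le> Re (lam i)"
proof (rule ccontr)
  assume "\<not> 0 \<le> Re (lam i)"
  then have r: "Re (lam i) < 0" by simp
  define x where "x = complex_of_real (- 1 / Re (lam i))"
  have li: "lam i = complex_of_real (Re (lam i))" using re by (simp add: complex_eq_iff)
  have "1 + lam i * x = 0" using r unfolding x_def by (subst li) (simp add: field_simps flip: of_real_mult)
  then have p0: "poly (Epoly lam n) x = 0" unfolding Epoly_def poly_prod using i
    by (intro prod_zero) (auto simp: mult.commute intro!: bexI[of _ i])
  define E where "E = Epoly lam n"
  have xnn: "0 \<le> x" unfolding x_def using r by (simp add: less_eq_complex_def divide_simps)
  have "poly E x = (\<Sum>k\<le>degree E. coeff E k * x ^ k)" by (rule poly_altdef)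
  also have "\<dots> = coeff E 0 * x ^ 0 + (\<Sum>k\<in>{1..degree E}. coeff E k * x ^ k)"
    by (rule sum_split0)
  also have "\<dots> = 1 + (\<Sum>k\<in>{1..degree E}. coeff E k * x ^ k)"
    unfolding E_def Epoly_coeff0 by simp
  finally have pe: "poly E x = 1 + (\<Sum>k\<in>{1..degree E}. coeff E k * x ^ k)" .
  have "0 \<le> (\<Sum>k\<in>{1..degree E}. coeff E k * x ^ k)"
  proof (rule sum_nonneg)
    fix k assume "k \<in> {1..degree E}"
    then have "k \<in> {1..n}" using Epoly_degree[of lam n] unfolding E_def by auto
    then have "0 \<le> coeff E k" using nn unfolding E_def by auto
    moreover have "0 \<le> x ^ k" using xnn by (induction k) (auto simp: less_eq_complex_def intro: mult_nonneg_nonneg)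
    ultimately show "0 \<le> coeff E k * x ^ k" by (rule mult_nonneg_nonneg)
  qed
  then have "1 \<le> poly E x" using pe by simp
  then show False using p0 unfolding E_def by (simp add: less_eq_complex_def)
qed



definition cinner :: "complex^'n \<Rightarrow> complex^'n \<Rightarrow> complex" where
  "cinner x y = (\<Sum>i\<in>UNIV. cnj (vec_nth x i) * vec_nth y i)"

lemma quad_form_cinner: "quad_form A x = cinner x (A *v x)"
  unfolding quad_form_def cinner_def matrix_vector_mult_def
  by (simp add: sum_distrib_left mult.assoc)

lemma cinner_add_right: "cinner x (y + z) = cinner x y + cinner x z"
  unfolding cinner_def by (simp add: distrib_left sum.distrib)
lemma cinner_add_left: "cinner (x + y) z = cinner x z + cinner y z"
  unfolding cinner_def by (simp add: distrib_right sum.distrib)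
lemma cinner_diff_right: "cinner x (y - z) = cinner x y - cinner x z"
  unfolding cinner_def by (simp add: right_diff_distrib sum_subtractf)
lemma cinner_diff_left: "cinner (x - y) z = cinner x z - cinner y z"
  unfolding cinner_def by (simp add: left_diff_distrib sum_subtractf)
lemma cinner_scale_right: "cinner x (c *s y) = c * cinner x y"
  unfolding cinner_def by (simp add: sum_distrib_left mult.left_commute)
lemma cinner_scale_left: "cinner (c *s x) y = cnj c * cinner x y"
  unfolding cinner_def by (simp add: sum_distrib_left mult.assoc)
lemma cinner_cnj: "cinner x y = cnj (cinner y x)"
  unfolding cinner_def by (simp add: mult.commute)
lemma cinner_self: "cinner x x = complex_of_real ((norm x)^2)"
proof -
  have "cinner x x = (\<Sum>i\<in>UNIV. complex_of_real ((norm (vec_nth x i))^2))"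
    unfolding cinner_def by (rule sum.cong) (simp_all only: complex_norm_square mult.commute)
  also have "\<dots> = complex_of_real (\<Sum>i\<in>UNIV. (norm (vec_nth x i))^2)" by simp
  also have "(\<Sum>i\<in>UNIV. (norm (vec_nth x i))^2) = (norm x)^2"
    unfolding norm_vec_def L2_set_def by (simp add: sum_nonneg)
  finally show ?thesis .
qed

lemma hermitian_entry: "hermitian_mat A \<Longrightarrow> vec_nth (vec_nth A i) j = cnj (vec_nth (vec_nth A j) i)"
  unfolding hermitian_mat_def adjoint_mat_def
  by (metis vec_lambda_beta)

lemma herm_cinner:
  assumes "hermitian_mat A"
  shows "cinner x (A *v y) = cinner (A *v x) y"
proof -
  have "cinner x (A *v y) = (\<Sum>i\<in>UNIV. \<Sum>j\<in>UNIV. cnj (vec_nth x i) * vec_nth (vec_nth A i) j * vec_nth y j)"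
    unfolding cinner_def matrix_vector_mult_def by (simp add: sum_distrib_left mult.assoc)
  also have "\<dots> = (\<Sum>j\<in>UNIV. \<Sum>i\<in>UNIV. cnj (vec_nth x i) * vec_nth (vec_nth A i) j * vec_nth y j)"
    by (rule sum.swap)
  also have "\<dots> = (\<Sum>j\<in>UNIV. \<Sum>i\<in>UNIV. cnj (vec_nth (vec_nth A j) i) * cnj (vec_nth x i) * vec_nth y j)"
  proof -
    have he: "cnj (vec_nth (vec_nth A j) i) = vec_nth (vec_nth A i) j" for i j
      using hermitian_entry[OF assms, of i j] by simp
    show ?thesis by (simp only: he mult.commute mult.left_commute)
  qed
  also have "\<dots> = cinner (A *v x) y"
    unfolding cinner_def matrix_vector_mult_def
    by (simp add: sum_distrib_right)
  finally show ?thesis .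
qed

lemma herm_quad_real:
  assumes "hermitian_mat A" shows "Im (quad_form A x) = 0"
proof -
  have "cnj (cinner x (A *v x)) = cinner x (A *v x)"
    using herm_cinner[OF assms, of x x] cinner_cnj[of "A *v x" x] by simp
  then have "Im (cnj (cinner x (A *v x))) = Im (cinner x (A *v x))" by simp
  then show ?thesis unfolding quad_form_cinner by simp
qed

lemma mv_smult: "(A::complex^'n^'n) *v (c *s x) = c *s (A *v x)"
  unfolding Finite_Cartesian_Product.vec_eq_iff matrix_vector_mult_def by (simp add: sum_distrib_left mult.left_commute)

lemma scaleR_smult: "(r::real) *\<^sub>R (y::complex^'n) = complex_of_real r *s y"
  unfolding Finite_Cartesian_Product.vec_eq_iff vector_scaleR_component vector_smult_component by (simp add: scaleR_conv_of_real)

lemma quad_scale: "quad_form A (complex_of_real r *s x) = complex_of_real (r^2) * quad_form A x"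
  unfolding quad_form_cinner mv_smult cinner_scale_right cinner_scale_left
  by (simp add: power2_eq_square)

lemma eig_quad: "A *v v = c *s v \<Longrightarrow> quad_form A v = c * complex_of_real ((norm v)^2)"
  unfolding quad_form_cinner by (simp add: cinner_scale_right cinner_self)

lemma herm_eig_real:
  assumes "hermitian_mat A" "A *v v = c *s v" "v \<noteq> 0"
  shows "Im c = 0"
proof -
  have "Im (c * complex_of_real ((norm v)^2)) = 0"
    using herm_quad_real[OF assms(1), of v] eig_quad[OF assms(2)] by simp
  then have "Im c * (norm v)^2 = 0" by simp
  moreover have "(norm v)^2 > 0" using assms(3) by simp
  ultimately show ?thesis by simp
qed

lemma psd_eig_nonneg:
  assumes "psd_mat A" "A *v v = c *s v" "v \<noteq> 0"
  shows "0 \<le> Re c"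
proof -
  have "0 \<le> Re (c * complex_of_real ((norm v)^2))"
    using assms(1) eig_quad[OF assms(2)] unfolding psd_mat_def by metis
  then have "0 \<le> Re c * (norm v)^2" by simp
  moreover have "(norm v)^2 > 0" using assms(3) by simp
  ultimately show ?thesis by (simp add: zero_le_mult_iff)
qed

lemma quad_lin_zero:
  fixes a b :: real
  assumes "\<forall>t. 0 \<le> 2*t*a + t^2*b"
  shows "a = 0"
proof (rule ccontr)
  assume a: "a \<noteq> 0"
  then have a2: "a^2 > 0" by simp
  show False
  proof (cases "b \<le> 0")
    case True
    have "0 \<le> 2*(-a)*a + (-a)^2*b" using assms by blast
    moreover have "2*(-a)*a + (-a)^2*b = -2*a^2 + a^2*b" by (simp add: power2_eq_square)
    moreover have "a^2*b \<le> 0" using True a2 by (simp add: mult_nonneg_nonpos)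
    ultimately show False using a2 by linarith
  next
    case False
    then have b: "b > 0" by simp
    have "0 \<le> 2*(-a/b)*a + (-a/b)^2*b" using assms by blast
    moreover have "2*(-a/b)*a + (-a/b)^2*b = - (a^2 / b)" using b by (simp add: field_simps power2_eq_square)
    moreover have "a^2 / b > 0" using a2 b by simp
    ultimately show False by linarith
  qed
qed

lemma cinner_zero_iff: "cinner x x = 0 \<longleftrightarrow> x = 0"
  unfolding cinner_self by simp

lemma psd_from_eigs:
  fixes A :: "complex^'n^'n"
  assumes herm: "hermitian_mat A"
    and eig: "\<And>c v. v \<noteq> 0 \<Longrightarrow> A *v v = c *s v \<Longrightarrow> 0 \<le> Re c"
  shows "0 \<le> Re (quad_form A x)"
proof (rule ccontr)
  assume neg: "\<not> 0 \<le> Re (quad_form A x)"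
  define f where "f y = Re (quad_form A y)" for y
  have cont: "continuous_on (sphere 0 1) f"
    unfolding f_def quad_form_def by (intro continuous_intros)
  have ne: "sphere (0::complex^'n) 1 \<noteq> {}"
    by simp
  obtain x0 where x0: "x0 \<in> sphere 0 1" and min: "\<And>y. y \<in> sphere 0 1 \<Longrightarrow> f x0 \<le> f y"
    using continuous_attains_inf[OF compact_sphere ne cont] by blast
  define \<mu> where "\<mu> = f x0"
  have nx0: "norm x0 = 1" using x0 by (simp add: dist_norm)
  have fscale: "f (complex_of_real r *s y) = r^2 * f y" for r y
    unfolding f_def quad_scale by simp
  have ge: "\<mu> * (norm y)^2 \<le> f y" for y
  proof (cases "y = 0")
    case True
    then show ?thesis unfolding f_def quad_form_def by simp
  next
    case False
    then have ny: "norm y > 0" by simp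
    define u where "u = complex_of_real (1 / norm y) *s y"
    have "norm u = 1" unfolding u_def scaleR_smult[symmetric] using ny by simp
    then have "\<mu> \<le> f u" unfolding \<mu>_def by (intro min) (simp add: dist_norm)
    also have "f u = f y / (norm y)^2" unfolding u_def fscale by (simp add: power_divide)
    finally show ?thesis using ny by (simp add: field_simps)
  qed
  have "\<mu> < 0"
  proof -
    have "x \<noteq> 0" using neg unfolding quad_form_def by auto
    then have ny: "norm x > 0" by simp
    have "\<mu> * (norm x)^2 \<le> f x" by (rule ge)
    also have "f x < 0" using neg unfolding f_def by simp
    finally show ?thesis using ny by (simp add: mult_less_0_iff)
  qed
  define D where "D y = A *v y - complex_of_real \<mu> *s y" for y
  have Dsym: "cinner x (D y) = cinner (D x) y" for x y
    unfolding D_def cinner_diff_right cinner_diff_left cinner_scale_right cinner_scale_left herm_cinner[OF herm]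
    by simp
  define g where "g y = Re (cinner y (D y))" for y
  have gf: "g y = f y - \<mu> * (norm y)^2" for y
    unfolding g_def f_def D_def quad_form_cinner cinner_diff_right cinner_scale_right cinner_self
    by simp
  have gnn: "0 \<le> g y" for y using ge[of y] gf[of y] by simp
  have gx0: "g x0 = 0" using gf[of x0] nx0 unfolding \<mu>_def by simp
  define w where "w = D x0"
  have Dadd: "D (a + b) = D a + D b" for a b
    unfolding D_def by (simp add: matrix_vector_right_distrib Finite_Cartesian_Product.vec_eq_iff algebra_simps)
  have Dsm: "D (c *s a) = c *s D a" for c a
    unfolding D_def by (simp add: mv_smult Finite_Cartesian_Product.vec_eq_iff algebra_simps)
  have exp: "g (x0 + complex_of_real t *s w) = 2 * t * (norm w)^2 + t^2 * g w" for t
  proof -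
    have "cinner (x0 + complex_of_real t *s w) (D (x0 + complex_of_real t *s w)) =
      cinner x0 (D x0) + complex_of_real t * cinner x0 (D w) + complex_of_real t * cinner w (D x0)
      + complex_of_real t * complex_of_real t * cinner w (D w)"
      unfolding Dadd Dsm cinner_add_left cinner_add_right cinner_scale_left cinner_scale_right
      by (simp add: algebra_simps)
    also have "cinner x0 (D w) = cinner w w" unfolding Dsym w_def ..
    also have "cinner w (D x0) = cinner w w" unfolding w_def ..
    finally show ?thesis unfolding g_def using gx0[unfolded g_def]
      by (simp add: cinner_self power2_eq_square)
  qed
  have "\<forall>t. 0 \<le> 2 * t * (norm w)^2 + t^2 * g w"
    using gnn exp by metis
  then have "(norm w)^2 = 0" by (rule quad_lin_zero)
  then have "w = 0" by simp
  then have "A *v x0 = complex_of_real \<mu> *s x0" unfolding w_def D_def by simp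
  moreover have "x0 \<noteq> 0" using nx0 by auto
  ultimately have "0 \<le> Re (complex_of_real \<mu>)" using eig by blast
  then show False using \<open>\<mu> < 0\<close> by simp
qed



definition mtr :: "'a::comm_ring_1 mat \<Rightarrow> 'a" where
  "mtr M = (\<Sum>i<dim_row M. M $$ (i,i))"

lemma mtr_mult_comm:
  assumes "A \<in> carrier_mat n m" "B \<in> carrier_mat m n"
  shows "mtr (A * B) = mtr (B * A)"
proof -
  have "mtr (A * B) = (\<Sum>i<n. \<Sum>k<m. A $$ (i,k) * B $$ (k,i))"
    unfolding mtr_def using assms by (simp add: scalar_prod_def atLeast0LessThan)
  also have "\<dots> = (\<Sum>k<m. \<Sum>i<n. B $$ (k,i) * A $$ (i,k))"
    by (subst sum.swap) (simp add: mult.commute)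
  also have "\<dots> = mtr (B * A)"
    unfolding mtr_def using assms by (simp add: scalar_prod_def atLeast0LessThan)
  finally show ?thesis .
qed

lemma upper_tri_pow:
  fixes B :: "'a::comm_ring_1 mat"
  assumes B: "B \<in> carrier_mat n n" and ut: "upper_triangular B"
  shows "(\<forall>i<n. \<forall>j<i. (B ^\<^sub>m k) $$ (i,j) = 0) \<and> (\<forall>i<n. (B ^\<^sub>m k) $$ (i,i) = B $$ (i,i) ^ k)"
proof (induction k)
  case 0
  then show ?case using B by simp
next
  case (Suc k)
  let ?P = "B ^\<^sub>m k"
  have P: "?P \<in> carrier_mat n n" using B by simp
  have Bz: "B $$ (l,j) = 0" if "j < l" "l < n" for l j using ut B that by auto
  have Pz: "?P $$ (i,l) = 0" if "l < i" "i < n" for i l using Suc that by auto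
  have e: "(?P * B) $$ (i,j) = (\<Sum>l<n. ?P $$ (i,l) * B $$ (l,j))" if "i < n" "j < n" for i j
    using P B that by (simp add: scalar_prod_def atLeast0LessThan)
  have low: "(?P * B) $$ (i,j) = 0" if "i < n" "j < i" for i j
  proof -
    have "(\<Sum>l<n. ?P $$ (i,l) * B $$ (l,j)) = 0"
    proof (rule sum.neutral, intro ballI)
      fix l assume "l \<in> {..<n}"
      then show "?P $$ (i,l) * B $$ (l,j) = 0"
        using Pz[of l i] Bz[of j l] that by (cases "l < i") auto
    qed
    then show ?thesis using e that by simp
  qed
  have dg: "(?P * B) $$ (i,i) = B $$ (i,i) ^ Suc k" if "i < n" for i
  proof -
    have "(\<Sum>l<n. ?P $$ (i,l) * B $$ (l,i)) = (\<Sum>l<n. if l = i then ?P $$ (i,i) * B $$ (i,i) else 0)"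
    proof (rule sum.cong[OF refl])
      fix l assume "l \<in> {..<n}"
      then show "?P $$ (i,l) * B $$ (l,i) = (if l = i then ?P $$ (i,i) * B $$ (i,i) else 0)"
        using Pz[of l i] Bz[of i l] that by (cases "l < i"; cases "l = i") auto
    qed
    also have "\<dots> = ?P $$ (i,i) * B $$ (i,i)" using that by simp
    finally show ?thesis using e that Suc by (simp add: mult.commute)
  qed
  show ?case using low dg by simp
qed

lemma jnf_spectrum:
  fixes A :: "complex mat"
  assumes A: "A \<in> carrier_mat n n"
  shows "\<exists>es. length es = n \<and> char_poly A = (\<Prod>a\<leftarrow>es. [:- a, 1:]) \<and>
     (\<forall>k. mtr (A ^\<^sub>m k) = (\<Sum>i<n. (es ! i) ^ k))"
proof -
  obtain es where cp: "char_poly A = (\<Prod>a\<leftarrow>es. [:- a, 1:])" and len: "length es = n"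
    using char_poly_factorized[OF A] by blast
  obtain B P Q where sd: "schur_decomposition A es = (B,P,Q)" by (cases "schur_decomposition A es") auto
  from schur_decomposition[OF A cp sd] have sim: "similar_mat_wit A B P Q"
    and ut: "upper_triangular B" and dg: "diag_mat B = es" by auto
  from sim A have B: "B \<in> carrier_mat n n" and P: "P \<in> carrier_mat n n" and Q: "Q \<in> carrier_mat n n"
    and QP: "Q * P = 1\<^sub>m n"
    unfolding similar_mat_wit_def Let_def by auto
  have "mtr (A ^\<^sub>m k) = (\<Sum>i<n. (es ! i) ^ k)" for k
  proof -
    have "A ^\<^sub>m k = P * B ^\<^sub>m k * Q" by (rule similar_mat_wit_pow_id[OF sim])
    also have "mtr \<dots> = mtr (Q * (P * B ^\<^sub>m k))"
      by (rule mtr_mult_comm[of _ n n]) (use P B Q in auto)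
    also have "Q * (P * B ^\<^sub>m k) = (Q * P) * B ^\<^sub>m k"
      using assoc_mult_mat[OF Q P pow_carrier_mat[OF B], of k] by simp
    also have "\<dots> = B ^\<^sub>m k" using QP B by simp
    also have "mtr (B ^\<^sub>m k) = (\<Sum>i<n. B $$ (i,i) ^ k)"
      unfolding mtr_def using upper_tri_pow[OF B ut, of k] B by simp
    also have "\<dots> = (\<Sum>i<n. (es ! i) ^ k)"
      using dg B unfolding diag_mat_def by (auto intro!: sum.cong)
    finally show ?thesis .
  qed
  then show ?thesis using cp len by blast
qed

definition toM :: "(nat \<Rightarrow> 'n::finite) \<Rightarrow> complex^'n^'n \<Rightarrow> complex mat" where
  "toM h X = Matrix.mat CARD('n) CARD('n) (\<lambda>(i,j). vec_nth (vec_nth X (h i)) (h j))"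

definition toV :: "(nat \<Rightarrow> 'n::finite) \<Rightarrow> complex^'n \<Rightarrow> complex Matrix.vec" where
  "toV h v = Matrix.vec CARD('n) (\<lambda>i. vec_nth v (h i))"

definition fromV :: "('n::finite \<Rightarrow> nat) \<Rightarrow> complex Matrix.vec \<Rightarrow> complex^'n" where
  "fromV g w = (\<chi> k. vec_index w (g k))"

lemma toM_carrier[simp]: "toM h X \<in> carrier_mat CARD('n) CARD('n)" for h :: "nat \<Rightarrow> 'n::finite"
  unfolding toM_def by simp

lemma reidx:
  assumes "bij_betw h {..<CARD('n)} (UNIV::'n::finite set)"
  shows "(\<Sum>k\<in>UNIV. f k) = (\<Sum>l<CARD('n). f (h l))"
  using sum.reindex_bij_betw[OF assms, of f] by simp

lemma toM_mult:
  assumes bij: "bij_betw h {..<CARD('n)} (UNIV::'n::finite set)"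
  shows "toM h (A ** B) = toM h A * toM h B"
proof (rule eq_matI)
  fix i j assume ij: "i < dim_row (toM h A * toM h B)" "j < dim_col (toM h A * toM h B)"
  then have i: "i < CARD('n)" and j: "j < CARD('n)" by (simp_all add: toM_def)
  have "(toM h A * toM h B) $$ (i,j) = (\<Sum>l<CARD('n). vec_nth (vec_nth A (h i)) (h l) * vec_nth (vec_nth B (h l)) (h j))"
    using i j by (simp add: toM_def scalar_prod_def atLeast0LessThan)
  also have "\<dots> = (\<Sum>k\<in>UNIV. vec_nth (vec_nth A (h i)) k * vec_nth (vec_nth B k) (h j))"
    by (rule reidx[OF bij, symmetric])
  also have "\<dots> = toM h (A ** B) $$ (i,j)"
    using i j by (simp add: toM_def matrix_matrix_mult_def)
  finally show "toM h (A ** B) $$ (i,j) = (toM h A * toM h B) $$ (i,j)" by simp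
qed (simp_all add: toM_def)

lemma toM_one:
  assumes bij: "bij_betw h {..<CARD('n)} (UNIV::'n::finite set)"
  shows "toM h (Finite_Cartesian_Product.mat 1 :: complex^'n^'n) = 1\<^sub>m CARD('n)"
proof (rule eq_matI)
  fix i j assume "i < dim_row (1\<^sub>m CARD('n) :: complex mat)" "j < dim_col (1\<^sub>m CARD('n) :: complex mat)"
  then have i: "i < CARD('n)" and j: "j < CARD('n)" by simp_all
  have "h i = h j \<longleftrightarrow> i = j" using bij i j unfolding bij_betw_def inj_on_def by auto
  then show "toM h (Finite_Cartesian_Product.mat 1 :: complex^'n^'n) $$ (i,j) = 1\<^sub>m CARD('n) $$ (i,j)"
    using i j by (simp add: toM_def Finite_Cartesian_Product.mat_def)
qed (simp_all add: toM_def)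

lemma toM_pow:
  assumes bij: "bij_betw h {..<CARD('n)} (UNIV::'n::finite set)"
  shows "toM h (matpow X k) = toM h X ^\<^sub>m k"
proof (induction k)
  case 0
  then show ?case using toM_one[OF bij] by (simp add: toM_def)
next
  case (Suc k)
  then show ?case by (simp add: toM_mult[OF bij])
qed

lemma toM_trace:
  assumes bij: "bij_betw h {..<CARD('n)} (UNIV::'n::finite set)"
  shows "trace X = mtr (toM h X)"
  unfolding trace_def mtr_def using reidx[OF bij] by (simp add: toM_def)

lemma toV_eig:
  assumes bij: "bij_betw h {..<CARD('n)} (UNIV::'n::finite set)"
    and ev: "X *v v = c *s v" and nz: "v \<noteq> 0"
  shows "eigenvector (toM h X) (toV h v) c"
proof -
  have "toM h X *\<^sub>v toV h v = c \<cdot>\<^sub>v toV h v"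
  proof (rule eq_vecI)
    fix i assume "i < dim_vec (c \<cdot>\<^sub>v toV h v)"
    then have i: "i < CARD('n)" by (simp add: toV_def)
    have "(toM h X *\<^sub>v toV h v) $ i = (\<Sum>l<CARD('n). vec_nth (vec_nth X (h i)) (h l) * vec_nth v (h l))"
      using i by (simp add: toM_def toV_def scalar_prod_def atLeast0LessThan)
    also have "\<dots> = (\<Sum>k\<in>UNIV. vec_nth (vec_nth X (h i)) k * vec_nth v k)"
      by (rule reidx[OF bij, symmetric])
    also have "\<dots> = vec_nth (X *v v) (h i)" by (simp add: matrix_vector_mult_def)
    also have "\<dots> = (c \<cdot>\<^sub>v toV h v) $ i" using ev i by (simp add: toV_def)
    finally show "(toM h X *\<^sub>v toV h v) $ i = (c \<cdot>\<^sub>v toV h v) $ i" .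
  qed (simp add: toM_def toV_def)
  moreover have "toV h v \<noteq> 0\<^sub>v CARD('n)"
  proof
    assume z: "toV h v = 0\<^sub>v CARD('n)"
    have "vec_nth v k = 0" for k
    proof -
      have "k \<in> h ` {..<CARD('n)}" using bij unfolding bij_betw_def by simp
      then obtain l where l: "l < CARD('n)" "h l = k" by auto
      have "toV h v $ l = 0" using z l by simp
      then show ?thesis using l by (simp add: toV_def)
    qed
    then have "v = 0" by (simp add: Finite_Cartesian_Product.vec_eq_iff)
    then show False using nz by simp
  qed
  ultimately show ?thesis unfolding eigenvector_def by (simp add: toM_def toV_def)
qed

lemma fromV_eig:
  assumes bij: "bij_betw h {..<CARD('n)} (UNIV::'n::finite set)"
    and ev: "eigenvector (toM h X) w c"
  shows "X *v fromV (inv_into {..<CARD('n)} h) w = c *s fromV (inv_into {..<CARD('n)} h) w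
     \<and> fromV (inv_into {..<CARD('n)} h) w \<noteq> 0"
proof -
  define g where "g = inv_into {..<CARD('n)} h"
  have gh: "g (h l) = l" if "l < CARD('n)" for l
    using bij that unfolding g_def bij_betw_def by (simp add: inv_into_f_f)
  have hg: "h (g k) = k" "g k < CARD('n)" for k
  proof -
    have k: "k \<in> h ` {..<CARD('n)}" using bij unfolding bij_betw_def by simp
    show "h (g k) = k" unfolding g_def by (rule f_inv_into_f[OF k])
    show "g k < CARD('n)" using inv_into_into[OF k] unfolding g_def by simp
  qed
  from ev have w: "w \<in> carrier_vec CARD('n)" and wz: "w \<noteq> 0\<^sub>v CARD('n)"
    and ew: "toM h X *\<^sub>v w = c \<cdot>\<^sub>v w"
    unfolding eigenvector_def by (auto simp: toM_def)
  have "X *v fromV g w = c *s fromV g w"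
  proof (subst Finite_Cartesian_Product.vec_eq_iff, intro allI)
    fix k
    have "vec_nth (X *v fromV g w) k = (\<Sum>k'\<in>UNIV. vec_nth (vec_nth X k) k' * vec_index w (g k'))"
      by (simp add: matrix_vector_mult_def fromV_def)
    also have "\<dots> = (\<Sum>l<CARD('n). vec_nth (vec_nth X k) (h l) * vec_index w (g (h l)))"
      by (rule reidx[OF bij])
    also have "\<dots> = (\<Sum>l<CARD('n). vec_nth (vec_nth X (h (g k))) (h l) * vec_index w l)"
      using gh hg by simp
    also have "\<dots> = (toM h X *\<^sub>v w) $ (g k)"
      using hg w by (simp add: toM_def scalar_prod_def atLeast0LessThan)
    also have "\<dots> = c * vec_index w (g k)" using ew hg w by simp
    finally show "vec_nth (X *v fromV g w) k = vec_nth (c *s fromV g w) k"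
      by (simp add: fromV_def)
  qed
  moreover have "fromV g w \<noteq> 0"
  proof
    assume z: "fromV g w = 0"
    have "w = 0\<^sub>v CARD('n)"
    proof (rule eq_vecI)
      fix i assume "i < dim_vec (0\<^sub>v CARD('n) :: complex Matrix.vec)"
      then have i: "i < CARD('n)" by simp
      have "vec_nth (fromV g w) (h i) = 0" using z by simp
      then show "w $ i = 0\<^sub>v CARD('n) $ i" using gh[OF i] i by (simp add: fromV_def)
    qed (use w in simp)
    then show False using wz by simp
  qed
  ultimately show ?thesis unfolding g_def by simp
qed


lemma S_poly_Epoly:
  assumes tr: "\<forall>l\<ge>1. trace (matpow X l) = (\<Sum>i<n. lam i ^ l)"
  shows "S_poly m X = coeff (Epoly lam n) m"
proof (induction m rule: less_induct)
  case (less m)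
  show ?case
  proof (cases "m = 0")
    case True
    then show ?thesis by (subst S_poly.simps) (simp add: Epoly_coeff0)
  next
    case False
    have "S_poly m X = (1 / of_nat m) * (\<Sum>l\<in>{1..m}. (-1) ^ (l - 1) * trace (matpow X l) * S_poly (m - l) X)"
      using False by (subst S_poly.simps) simp
    also have "(\<Sum>l\<in>{1..m}. (-1) ^ (l - 1) * trace (matpow X l) * S_poly (m - l) X) =
       (\<Sum>l\<in>{1..m}. (-1)^(l-1) * (\<Sum>i<n. lam i ^ l) * coeff (Epoly lam n) (m - l))"
    proof (rule sum.cong[OF refl])
      fix l assume l: "l \<in> {1..m}"
      then have "m - l < m" by auto
      then show "(-1) ^ (l - 1) * trace (matpow X l) * S_poly (m - l) X =
        (-1)^(l-1) * (\<Sum>i<n. lam i ^ l) * coeff (Epoly lam n) (m - l)"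
        using less tr l by simp
    qed
    also have "\<dots> = of_nat m * coeff (Epoly lam n) m"
      using newton[of m lam n] False by simp
    finally show ?thesis using False by simp
  qed
qed

lemma herm_comb:
  assumes "hermitian_mat A" "hermitian_mat B"
  shows "hermitian_mat (a *\<^sub>R A - b *\<^sub>R B)"
proof -
  have hA: "cnj (vec_nth (vec_nth A j) i) = vec_nth (vec_nth A i) j" for i j
    using hermitian_entry[OF assms(1), of i j] by simp
  have hB: "cnj (vec_nth (vec_nth B j) i) = vec_nth (vec_nth B i) j" for i j
    using hermitian_entry[OF assms(2), of i j] by simp
  show ?thesis
    unfolding hermitian_mat_def adjoint_mat_def Finite_Cartesian_Product.vec_eq_iff
    by (simp add: hA hB)
qed

lemma quad_add: "quad_form (A + B) x = quad_form A x + quad_form B x"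
  unfolding quad_form_def by (simp add: algebra_simps sum.distrib)
lemma quad_diff: "quad_form (A - B) x = quad_form A x - quad_form B x"
  unfolding quad_form_def by (simp add: algebra_simps sum_subtractf)
lemma quad_scaleR: "quad_form (a *\<^sub>R A) x = complex_of_real a * quad_form A x"
  unfolding quad_form_def vector_scaleR_component by (simp add: scaleR_conv_of_real sum_distrib_left algebra_simps)

lemma trace_comb: "trace (a *\<^sub>R A - b *\<^sub>R B) = complex_of_real a * trace A - complex_of_real b * trace B"
  unfolding trace_def vector_minus_component vector_scaleR_component by (simp add: scaleR_conv_of_real sum_distrib_left sum_subtractf)

theorem lemma4:
  fixes \<rho> \<eta> :: "complex^'n^'n" and s :: real
  assumes "density_op \<rho>" and "density_op \<eta>" and "0 < s"
  shows "(\<exists>s' :: real. \<exists>\<tau> :: complex^'n^'n.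
            0 < s' \<and> s' \<le> s \<and> density_op \<tau> \<and> \<eta> = (1 / (1 + s')) *\<^sub>R (\<rho> + s' *\<^sub>R \<tau>))
         \<longleftrightarrow>
         (\<forall>m \<in> {1..CARD('n)}.
            Im (S_poly m (((1 + s) / s) *\<^sub>R \<eta> - (1 / s) *\<^sub>R \<rho>)) = 0 \<and>
            0 \<le> Re (S_poly m (((1 + s) / s) *\<^sub>R \<eta> - (1 / s) *\<^sub>R \<rho>)))"
proof -
  obtain X where X: "X = ((1 + s) / s) *\<^sub>R \<eta> - (1 / s) *\<^sub>R \<rho>" by blast
  define n where "n = CARD('n)"
  obtain h where bij: "bij_betw h {..<CARD('n)} (UNIV::'n set)"
    using ex_bij_betw_nat_finite[of "UNIV::'n set"] by (auto simp: atLeast0LessThan)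
  obtain es where len: "length es = n" and cp: "char_poly (toM h X) = (\<Prod>a\<leftarrow>es. [:- a, 1:])"
    and trs: "\<forall>k. mtr (toM h X ^\<^sub>m k) = (\<Sum>i<n. (es ! i) ^ k)"
    using jnf_spectrum[OF toM_carrier[of h X]] unfolding n_def by blast
  define lam where "lam i = es ! i" for i
  have tr: "\<forall>l\<ge>1. trace (matpow X l) = (\<Sum>i<n. lam i ^ l)"
    using trs unfolding lam_def toM_trace[OF bij] toM_pow[OF bij] by simp
  have Sp: "S_poly m X = coeff (Epoly lam n) m" for m
    by (rule S_poly_Epoly[OF tr])
  have eig_in: "\<exists>v. v \<noteq> 0 \<and> X *v v = lam i *s v" if i: "i < n" for i
  proof -
    have "es ! i \<in> set es" using i len by simp
    then have "poly (char_poly (toM h X)) (es ! i) = 0" unfolding cp by (rule linear_poly_root)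
    then have "eigenvalue (toM h X) (es ! i)"
      using eigenvalue_root_char_poly[OF toM_carrier[of h X]] by simp
    then obtain w where "eigenvector (toM h X) w (es ! i)" unfolding eigenvalue_def by blast
    from fromV_eig[OF bij this] show ?thesis unfolding lam_def by blast
  qed
  have eig_all: "\<exists>i<n. c = lam i" if "v \<noteq> 0" "X *v v = c *s v" for c v
  proof -
    have "eigenvalue (toM h X) c" using toV_eig[OF bij that(2,1)] unfolding eigenvalue_def by blast
    then have "poly (\<Prod>a\<leftarrow>es. [:- a, 1:]) c = 0"
      using eigenvalue_root_char_poly[OF toM_carrier[of h X]] cp by simp
    then have "c \<in> set es" by (auto simp: poly_prod_list_zero_iff)
    then show ?thesis using len unfolding lam_def by (auto simp: in_set_conv_nth)
  qed
  have hr: "hermitian_mat \<rho>" and he: "hermitian_mat \<eta>"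
    using assms unfolding density_op_def psd_mat_def by auto
  have hX: "hermitian_mat X" unfolding X by (rule herm_comb[OF he hr])
  have lam_real: "Im (lam i) = 0" if "i < n" for i
    using eig_in[OF that] herm_eig_real[OF hX] by blast
  show ?thesis
    unfolding X[symmetric]
  proof
    assume "\<exists>s' \<tau>. 0 < s' \<and> s' \<le> s \<and> density_op \<tau> \<and> \<eta> = (1 / (1 + s')) *\<^sub>R (\<rho> + s' *\<^sub>R \<tau>)"
    then obtain s' \<tau> where s': "0 < s'" "s' \<le> s" and dt: "density_op \<tau>"
      and eta: "\<eta> = (1 / (1 + s')) *\<^sub>R (\<rho> + s' *\<^sub>R \<tau>)" by blast
    have psdX: "psd_mat X" unfolding psd_mat_def
    proof (intro conjI allI hX)
      fix x
      show "Im (quad_form X x) = 0" by (rule herm_quad_real[OF hX])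
      define r where "r = Re (quad_form \<rho> x)"
      define t where "t = Re (quad_form \<tau> x)"
      have r: "0 \<le> r" using assms(1) unfolding r_def density_op_def psd_mat_def by blast
      have t: "0 \<le> t" using dt unfolding t_def density_op_def psd_mat_def by blast
      have "Re (quad_form X x) = (1 + s) / s * ((r + s' * t) / (1 + s')) - r / s"
        unfolding X eta quad_diff quad_scaleR quad_add r_def t_def by simp
      also have "\<dots> = ((s - s') * r + (1 + s) * s' * t) / (s * (1 + s'))"
        using assms(3) s' by (simp add: divide_simps) (simp add: algebra_simps)
      also have "\<dots> \<ge> 0"
        using assms(3) s' r t by (intro divide_nonneg_pos add_nonneg_nonneg mult_nonneg_nonneg) auto
      finally show "0 \<le> Re (quad_form X x)" .
    qed
    have "0 \<le> lam i" if i: "i < n" for i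
    proof -
      obtain v where "v \<noteq> 0" "X *v v = lam i *s v" using eig_in[OF i] by blast
      then have "0 \<le> Re (lam i)" using psd_eig_nonneg[OF psdX] by blast
      then show ?thesis using lam_real[OF i] by (simp add: less_eq_complex_def)
    qed
    then have "0 \<le> coeff (Epoly lam n) m" for m by (intro Epoly_nonneg) auto
    then show "\<forall>m\<in>{1..CARD('n)}. Im (S_poly m X) = 0 \<and> 0 \<le> Re (S_poly m X)"
      unfolding Sp by (simp add: less_eq_complex_def)
  next
    assume S: "\<forall>m\<in>{1..CARD('n)}. Im (S_poly m X) = 0 \<and> 0 \<le> Re (S_poly m X)"
    have "\<forall>m\<in>{1..n}. 0 \<le> coeff (Epoly lam n) m"
      using S unfolding Sp n_def by (simp add: less_eq_complex_def)
    then have lnn: "0 \<le> Re (lam i)" if "i < n" for i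
      using Epoly_coeffs_nonneg_imp that lam_real[OF that] by blast
    have psdX: "psd_mat X" unfolding psd_mat_def
    proof (intro conjI allI hX)
      fix x
      show "Im (quad_form X x) = 0" by (rule herm_quad_real[OF hX])
      show "0 \<le> Re (quad_form X x)"
      proof (rule psd_from_eigs[OF hX])
        fix c v assume "v \<noteq> 0" "X *v v = c *s v"
        then obtain i where "i < n" "c = lam i" using eig_all by blast
        then show "0 \<le> Re c" using lnn by simp
      qed
    qed
    have "trace X = 1"
      unfolding X trace_comb using assms(1,2) assms(3) unfolding density_op_def
      by (simp add: field_simps)
    then have dX: "density_op X" using psdX unfolding density_op_def by simp
    have "s *\<^sub>R X = (1 + s) *\<^sub>R \<eta> - \<rho>"
      unfolding X using assms(3) by (simp add: scaleR_diff_right)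
    then have "\<rho> + s *\<^sub>R X = (1 + s) *\<^sub>R \<eta>" by simp
    then have "\<eta> = (1 / (1 + s)) *\<^sub>R (\<rho> + s *\<^sub>R X)"
      using assms(3) by simp
    then show "\<exists>s' \<tau>. 0 < s' \<and> s' \<le> s \<and> density_op \<tau> \<and> \<eta> = (1 / (1 + s')) *\<^sub>R (\<rho> + s' *\<^sub>R \<tau>)"
      using assms(3) dX by blast
  qed
qed

end
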